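(* Let $(G,f)$ be a tensor network where $G=(\mathcal V,\mathcal E)$ admits an $(s,t)$-bipolar orientation for some vertices $s,t\in\mathcal V$. Then \[|\mathrm{val}(G,f)|\le\|f(s)\|_F\,\|f(t)\|_F\prod_{v\in\mathcal V\setminus\{s,t\}}\|f(v)\|_{\mathrm{mat}\text{-}\mathrm{op}}\prod_{e\in\mathcal E}\|f(e)\|_{\mathrm{op}}.\]
   Context: Tensor network: a pair $(G,f)$ where $G=(\mathcal V,\mathcal E)$ is a finite multigraph without self-loops, each vertex $v$ has an ordered list $\partial v$ of its incident edges ($\deg(v)=|\partial v|$, counting multiplicity), each edge $e=(u,v)$ has an ordering of its endpoints; $f(v)\in(\mathbb R^n)^{\otimes\deg(v)}$ for $v\in\mathcal V$ and $f(e)\in\mathbb R^{n\times n}$ for $e\in\mathcal E$. Its value is $\mathrm{val}(G,f)=\sum_{(i_{v,e})}\prod_{v\in\mathcal V}f(v)[i_{v,e}:e\in\partial v]\prod_{e=(u,v)\in\mathcal E}f(e)[i_{u,e},i_{v,e}]$, summing over one index $i_{v,e}\in[n]$ for each incident vertex–edge pair. Bipolar orientation: $G$ admits an $(s,t)$-bipolar orientation if its edges can be directed so that there are no directed cycles, $s$ is the unique source (no incoming edges) and $t$ the unique sink (no outgoing edges). Norms: for a tensor $T\in(\mathbb R^n)^{\otimes k}$, $\|T\|_F$ is the Euclidean norm of its vectorization; for a partition $[k]=I\sqcup J$, $\|T\|_{I\to J}$ is the operator norm of the matricization of $T$ with row indices $I$ and column indices $J$; $\|T\|_{\mathrm{mat}\text{-}\mathrm{op}}=\max\{\|T\|_{I\to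 J}: I\sqcup J=[k],\ |I|\ge1,\ |J|\ge1\}$. $\|\cdot\|_{\mathrm{op}}$ is the matrix operator norm. *)

theory Defs
  imports Complex_Main "HOL-Library.FuncSet"
begin

text \<open>A tensor with legs indexed by a finite set K of edges is a function
('e \<Rightarrow> nat) \<Rightarrow> real, evaluated only on index assignments in PiE K {..<n}.\<close>

definition multigraph :: "'v set \<Rightarrow> 'e set \<Rightarrow> ('e \<Rightarrow> 'v \<times> 'v) \<Rightarrow> bool" where
  "multigraph V E ends \<longleftrightarrow> finite V \<and> finite E \<and>
     (\<forall>e\<in>E. fst (ends e) \<in> V \<and> snd (ends e) \<in> V \<and> fst (ends e) \<noteq> snd (ends e))"

definition incident :: "'e set \<Rightarrow> ('e \<Rightarrow> 'v \<times> 'v) \<Rightarrow> 'v \<Rightarrow> 'e set" where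
  "incident E ends v = {e\<in>E. fst (ends e) = v \<or> snd (ends e) = v}"

text \<open>Value of the network. The index i e = (i_{u,e}, i_{v,e}) for e = (u,v).\<close>
definition tn_val :: "nat \<Rightarrow> 'v set \<Rightarrow> 'e set \<Rightarrow> ('e \<Rightarrow> 'v \<times> 'v)
    \<Rightarrow> ('v \<Rightarrow> ('e \<Rightarrow> nat) \<Rightarrow> real) \<Rightarrow> ('e \<Rightarrow> nat \<Rightarrow> nat \<Rightarrow> real) \<Rightarrow> real" where
  "tn_val n V E ends fv fe =
    (\<Sum>i\<in>PiE E (\<lambda>_. {..<n} \<times> {..<n}).
       (\<Prod>v\<in>V. fv v (restrict (\<lambda>e. if fst (ends e) = v then fst (i e) else snd (i e))
                               (incident E ends v)))
     * (\<Prod>e\<in>E. fe e (fst (i e)) (snd (i e))))"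

definition frob_norm :: "nat \<Rightarrow> 'e set \<Rightarrow> (('e \<Rightarrow> nat) \<Rightarrow> real) \<Rightarrow> real" where
  "frob_norm n K T = sqrt (\<Sum>a\<in>PiE K (\<lambda>_. {..<n}). (T a)^2)"

definition op_norm :: "'a set \<Rightarrow> 'b set \<Rightarrow> ('a \<Rightarrow> 'b \<Rightarrow> real) \<Rightarrow> real" where
  "op_norm A B M = Sup {sqrt (\<Sum>a\<in>A. (\<Sum>b\<in>B. M a b * y b)^2) | y. (\<Sum>b\<in>B. (y b)^2) \<le> 1}"

definition matricization_norm :: "nat \<Rightarrow> 'e set \<Rightarrow> 'e set \<Rightarrow> (('e \<Rightarrow> nat) \<Rightarrow> real) \<Rightarrow> real" where
  "matricization_norm n I J T =
     op_norm (PiE I (\<lambda>_. {..<n})) (PiE J (\<lambda>_. {..<n}))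
             (\<lambda>a b. T (\<lambda>e. if e \<in> I then a e else b e))"

definition mat_op_norm :: "nat \<Rightarrow> 'e set \<Rightarrow> (('e \<Rightarrow> nat) \<Rightarrow> real) \<Rightarrow> real" where
  "mat_op_norm n K T = Max {matricization_norm n I (K - I) T | I. I \<subseteq> K \<and> I \<noteq> {} \<and> K - I \<noteq> {}}"

definition matrix_op_norm :: "nat \<Rightarrow> (nat \<Rightarrow> nat \<Rightarrow> real) \<Rightarrow> real" where
  "matrix_op_norm n M = op_norm {..<n} {..<n} M"

text \<open>An orientation chooses for each edge whether to keep (True) or reverse (False)
its endpoint order.\<close>
definition oriented_arc :: "('e \<Rightarrow> 'v \<times> 'v) \<Rightarrow> ('e \<Rightarrow> bool) \<Rightarrow> 'e \<Rightarrow> 'v \<times> 'v" where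
  "oriented_arc ends d e = (if d e then ends e else prod.swap (ends e))"

definition bipolar_orientation :: "'v set \<Rightarrow> 'e set \<Rightarrow> ('e \<Rightarrow> 'v \<times> 'v) \<Rightarrow> ('e \<Rightarrow> bool)
    \<Rightarrow> 'v \<Rightarrow> 'v \<Rightarrow> bool" where
  "bipolar_orientation V E ends d s t \<longleftrightarrow>
     s \<in> V \<and> t \<in> V \<and> s \<noteq> t \<and>
     acyclic (oriented_arc ends d ` E) \<and>
     (\<forall>v\<in>V. (\<not> (\<exists>e\<in>E. snd (oriented_arc ends d e) = v)) \<longleftrightarrow> v = s) \<and>
     (\<forall>v\<in>V. (\<not> (\<exists>e\<in>E. fst (oriented_arc ends d e) = v)) \<longleftrightarrow> v = t)"

definition has_bipolar_orientation :: "'v set \<Rightarrow> 'e set \<Rightarrow> ('e \<Rightarrow> 'v \<times> 'v) \<Rightarrow> 'v \<Rightarrow> 'v \<Rightarrow> bool" where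
  "has_bipolar_orientation V E ends s t \<longleftrightarrow> (\<exists>d. bipolar_orientation V E ends d s t)"

end

theory Submission
  imports Defs "HOL-Analysis.Analysis"
begin

lemma op_norm_set_bdd:
  fixes M :: "'a \<Rightarrow> 'b \<Rightarrow> real"
  shows "bdd_above {sqrt (\<Sum>a\<in>A. (\<Sum>b\<in>B. M a b * y b)^2) | y. (\<Sum>b\<in>B. (y b)^2) \<le> 1}"
proof (rule bdd_aboveI[where M="sqrt (\<Sum>a\<in>A. (\<Sum>b\<in>B. (M a b)^2))"], clarify)
  fix y :: "'b \<Rightarrow> real" assume y: "(\<Sum>b\<in>B. (y b)^2) \<le> 1"
  have "(\<Sum>a\<in>A. (\<Sum>b\<in>B. M a b * y b)^2) \<le> (\<Sum>a\<in>A. (\<Sum>b\<in>B. (M a b)^2))"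
  proof (rule sum_mono)
    fix a
    have "(\<Sum>b\<in>B. M a b * y b)^2 \<le> (\<Sum>b\<in>B. (M a b)^2) * (\<Sum>b\<in>B. (y b)^2)"
      by (rule Cauchy_Schwarz_ineq_sum)
    also have "\<dots> \<le> (\<Sum>b\<in>B. (M a b)^2) * 1"
      by (rule mult_left_mono[OF y]) (simp add: sum_nonneg)
    finally show "(\<Sum>b\<in>B. M a b * y b)^2 \<le> (\<Sum>b\<in>B. (M a b)^2)" by simp
  qed
  then show "sqrt (\<Sum>a\<in>A. (\<Sum>b\<in>B. M a b * y b)^2) \<le> sqrt (\<Sum>a\<in>A. (\<Sum>b\<in>B. (M a b)^2))"
    by simp
qed

lemma op_norm_nonneg: "0 \<le> op_norm A B (M :: 'a \<Rightarrow> 'b \<Rightarrow> real)"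
proof -
  have "sqrt (\<Sum>a\<in>A. (\<Sum>b\<in>B. M a b * (\<lambda>_. 0) b)^2) \<in> {sqrt (\<Sum>a\<in>A. (\<Sum>b\<in>B. M a b * y b)^2) | y. (\<Sum>b\<in>B. (y b)^2) \<le> 1}"
    by (rule CollectI, rule exI[of _ "\<lambda>_. 0"]) simp
  then have "sqrt (\<Sum>a\<in>A. (\<Sum>b\<in>B. M a b * (\<lambda>_. 0) b)^2) \<le> op_norm A B M"
    unfolding op_norm_def by (rule cSup_upper[OF _ op_norm_set_bdd])
  then show ?thesis by simp
qed

lemma op_norm_bound:
  fixes M :: "'a \<Rightarrow> 'b \<Rightarrow> real"
  assumes "finite B"
  shows "(\<Sum>a\<in>A. (\<Sum>b\<in>B. M a b * y b)^2) \<le> (op_norm A B M)^2 * (\<Sum>b\<in>B. (y b)^2)"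
proof (cases "(\<Sum>b\<in>B. (y b)^2) = 0")
  case True
  then have "\<forall>b\<in>B. y b = 0" using assms by (simp add: sum_nonneg_eq_0_iff)
  then show ?thesis by (simp add: True)
next
  case False
  define ny where "ny = sqrt (\<Sum>b\<in>B. (y b)^2)"
  have S0: "0 \<le> (\<Sum>b\<in>B. (y b)^2)" by (simp add: sum_nonneg)
  have ny: "ny > 0" using False S0 unfolding ny_def by simp
  have nysq: "ny^2 = (\<Sum>b\<in>B. (y b)^2)" unfolding ny_def using S0 by simp
  define z where "z = (\<lambda>b. y b / ny)"
  have "(\<Sum>b\<in>B. (z b)^2) = (\<Sum>b\<in>B. (y b)^2) / ny^2"
    unfolding z_def by (simp add: power_divide sum_divide_distrib)
  also have "\<dots> = 1" using nysq False by simp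
  finally have z1: "(\<Sum>b\<in>B. (z b)^2) \<le> 1" by simp
  have "sqrt (\<Sum>a\<in>A. (\<Sum>b\<in>B. M a b * z b)^2) \<le> op_norm A B M"
    unfolding op_norm_def using z1 by (intro cSup_upper[OF _ op_norm_set_bdd]) blast
  moreover have "(\<Sum>a\<in>A. (\<Sum>b\<in>B. M a b * z b)^2) = (\<Sum>a\<in>A. (\<Sum>b\<in>B. M a b * y b)^2) / ny^2"
    unfolding z_def by (simp add: sum_divide_distrib[symmetric] power_divide)
  ultimately have "sqrt ((\<Sum>a\<in>A. (\<Sum>b\<in>B. M a b * y b)^2) / ny^2) \<le> op_norm A B M" by simp
  then have "sqrt (\<Sum>a\<in>A. (\<Sum>b\<in>B. M a b * y b)^2) / ny \<le> op_norm A B M"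
    using ny by (simp add: real_sqrt_divide)
  then have "sqrt (\<Sum>a\<in>A. (\<Sum>b\<in>B. M a b * y b)^2) \<le> op_norm A B M * ny"
    using ny by (simp add: divide_le_eq)
  then have "(sqrt (\<Sum>a\<in>A. (\<Sum>b\<in>B. M a b * y b)^2))^2 \<le> (op_norm A B M * ny)^2"
    by (rule power_mono) (simp add: sum_nonneg)
  then show ?thesis by (simp add: sum_nonneg power_mult_distrib nysq)
qed

lemma op_norm_transpose_bound:
  fixes M :: "'a \<Rightarrow> 'b \<Rightarrow> real"
  assumes "finite A" "finite B"
  shows "(\<Sum>b\<in>B. (\<Sum>a\<in>A. M a b * y a)^2) \<le> (op_norm A B M)^2 * (\<Sum>a\<in>A. (y a)^2)"
proof -
  define z where "z = (\<lambda>b. \<Sum>a\<in>A. M a b * y a)"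
  define S where "S = (\<Sum>b\<in>B. (z b)^2)"
  define w where "w = (\<lambda>a. \<Sum>b\<in>B. M a b * z b)"
  have S0: "0 \<le> S" unfolding S_def by (simp add: sum_nonneg)
  have "S = (\<Sum>b\<in>B. z b * (\<Sum>a\<in>A. M a b * y a))"
    unfolding S_def z_def by (simp add: power2_eq_square)
  also have "\<dots> = (\<Sum>a\<in>A. y a * w a)"
    unfolding w_def by (simp add: sum_distrib_left sum_distrib_right mult_ac sum.swap[of _ B A])
  finally have Sw: "S = (\<Sum>a\<in>A. y a * w a)" .
  have "S^2 \<le> (\<Sum>a\<in>A. (y a)^2) * (\<Sum>a\<in>A. (w a)^2)"
    unfolding Sw by (rule Cauchy_Schwarz_ineq_sum)
  also have "(\<Sum>a\<in>A. (w a)^2) \<le> (op_norm A B M)^2 * S"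
    unfolding w_def S_def by (rule op_norm_bound[OF assms(2)])
  then have "(\<Sum>a\<in>A. (y a)^2) * (\<Sum>a\<in>A. (w a)^2) \<le> (\<Sum>a\<in>A. (y a)^2) * ((op_norm A B M)^2 * S)"
    by (rule mult_left_mono) (simp add: sum_nonneg)
  finally have *: "S * S \<le> ((\<Sum>a\<in>A. (y a)^2) * (op_norm A B M)^2) * S"
    by (simp add: power2_eq_square mult_ac)
  have "S \<le> (op_norm A B M)^2 * (\<Sum>a\<in>A. (y a)^2)"
  proof (cases "S = 0")
    case True then show ?thesis by (simp add: sum_nonneg)
  next
    case False
    then have "S > 0" using S0 by simp
    with * show ?thesis by (simp add: mult_ac)
  qed
  then show ?thesis unfolding S_def z_def .
qed

lemma sum_PiE_insert:
  assumes "x \<notin> S"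
  shows "(\<Sum>g\<in>PiE (insert x S) T. f g) = (\<Sum>y\<in>T x. \<Sum>g\<in>PiE S T. f (g(x := y)))"
proof -
  have "(\<Sum>g\<in>PiE (insert x S) T. f g) = (\<Sum>(y,g)\<in>T x \<times> PiE S T. f (g(x := y)))"
    using assms
    by (intro sum.reindex_bij_witness[of _ "\<lambda>(y,g). g(x := y)" "\<lambda>g. (g x, g(x := undefined))"])
       (auto simp: PiE_def extensional_def)
  also have "\<dots> = (\<Sum>y\<in>T x. \<Sum>g\<in>PiE S T. f (g(x := y)))"
    by (subst sum.cartesian_product) auto
  finally show ?thesis .
qed

lemma tensor_bound:
  fixes M :: "'e \<Rightarrow> nat \<Rightarrow> nat \<Rightarrow> real"
  assumes "finite D"
    and "\<And>e y. e \<in> D \<Longrightarrow> (\<Sum>j<n. (\<Sum>i<n. M e i j * y i)^2) \<le> (c e)^2 * (\<Sum>i<n. (y i)^2)"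
    and "\<And>e. e \<in> D \<Longrightarrow> 0 \<le> c e"
  shows "(\<Sum>b\<in>PiE D (\<lambda>_. {..<n}). (\<Sum>a\<in>PiE D (\<lambda>_. {..<n}). r a * (\<Prod>e\<in>D. M e (a e) (b e)))^2)
         \<le> (\<Prod>e\<in>D. c e)^2 * (\<Sum>a\<in>PiE D (\<lambda>_. {..<n}). (r a)^2)"
  using assms
proof (induction D arbitrary: r rule: finite_induct)
  case empty
  then show ?case by simp
next
  case (insert e D)
  define X where "X = PiE D (\<lambda>_. {..<n::nat})"
  define K where "K = (\<lambda>a b. \<Prod>e\<in>D. M e (a e) (b e))"
  define w where "w = (\<lambda>i b. \<Sum>a\<in>X. r (a(e := i)) * K a b)"
  have Kupd: "(\<Prod>e'\<in>insert e D. M e' ((a(e := i)) e') ((b(e := j)) e')) = M e i j * K a b" for a b i j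
  proof -
    have "(\<Prod>e'\<in>D. M e' ((a(e := i)) e') ((b(e := j)) e')) = K a b"
      unfolding K_def using insert.hyps by (intro prod.cong) auto
    then show ?thesis using insert.hyps by simp
  qed
  have inner: "(\<Sum>a\<in>PiE (insert e D) (\<lambda>_. {..<n}). r a * (\<Prod>e'\<in>insert e D. M e' (a e') ((b(e := j)) e')))
      = (\<Sum>i<n. M e i j * w i b)" for b j
  proof -
    have "(\<Sum>a\<in>PiE (insert e D) (\<lambda>_. {..<n}). r a * (\<Prod>e'\<in>insert e D. M e' (a e') ((b(e := j)) e')))
        = (\<Sum>i<n. \<Sum>a\<in>X. r (a(e := i)) * (M e i j * K a b))"
      unfolding X_def by (simp only: sum_PiE_insert[OF insert.hyps(2)] Kupd)
    also have "\<dots> = (\<Sum>i<n. M e i j * w i b)"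
      unfolding w_def by (simp add: sum_distrib_left mult_ac)
    finally show ?thesis .
  qed
  have "(\<Sum>b\<in>PiE (insert e D) (\<lambda>_. {..<n}). (\<Sum>a\<in>PiE (insert e D) (\<lambda>_. {..<n}). r a * (\<Prod>e'\<in>insert e D. M e' (a e') (b e')))^2)
      = (\<Sum>j<n. \<Sum>b\<in>X. (\<Sum>i<n. M e i j * w i b)^2)"
    unfolding X_def by (subst sum_PiE_insert[OF insert.hyps(2)], simp only: inner)
  also have "\<dots> = (\<Sum>b\<in>X. \<Sum>j<n. (\<Sum>i<n. M e i j * w i b)^2)"
    by (rule sum.swap)
  also have "\<dots> \<le> (\<Sum>b\<in>X. (c e)^2 * (\<Sum>i<n. (w i b)^2))"
    by (rule sum_mono) (rule insert.prems(1), simp)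
  also have "\<dots> = (c e)^2 * (\<Sum>i<n. \<Sum>b\<in>X. (w i b)^2)"
    by (simp add: sum_distrib_left sum.swap[of _ X])
  also have "\<dots> \<le> (c e)^2 * (\<Sum>i<n. (\<Prod>e\<in>D. c e)^2 * (\<Sum>a\<in>X. (r (a(e := i)))^2))"
  proof (rule mult_left_mono[OF sum_mono])
    fix i
    show "(\<Sum>b\<in>X. (w i b)^2) \<le> (\<Prod>e\<in>D. c e)^2 * (\<Sum>a\<in>X. (r (a(e := i)))^2)"
      unfolding w_def K_def X_def
      by (rule insert.IH) (use insert.prems in auto)
  qed simp
  also have "\<dots> = (\<Prod>e\<in>insert e D. c e)^2 * (\<Sum>a\<in>PiE (insert e D) (\<lambda>_. {..<n}). (r a)^2)"
    unfolding X_def using insert.hyps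
    by (simp add: sum_PiE_insert sum_distrib_left power_mult_distrib mult_ac)
  finally show ?case .
qed

lemma sum_PiE_Un:
  assumes "A \<inter> B = {}"
  shows "(\<Sum>x\<in>PiE (A \<union> B) T. f x) = (\<Sum>a\<in>PiE A T. \<Sum>b\<in>PiE B T. f (\<lambda>e. if e \<in> A then a e else b e))"
proof -
  have "(\<Sum>x\<in>PiE (A \<union> B) T. f x) = (\<Sum>(a,b)\<in>PiE A T \<times> PiE B T. f (\<lambda>e. if e \<in> A then a e else b e))"
    using assms
    by (intro sum.reindex_bij_witness[of _ "\<lambda>(a,b) e. if e \<in> A then a e else b e" "\<lambda>x. (restrict x A, restrict x B)"])
       (auto simp: PiE_def extensional_def Pi_def intro!: arg_cong[where f=f] ext)
  also have "\<dots> = (\<Sum>a\<in>PiE A T. \<Sum>b\<in>PiE B T. f (\<lambda>e. if e \<in> A then a e else b e))"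
    by (subst sum.cartesian_product) auto
  finally show ?thesis .
qed

lemma sum_PiE_pairs:
  "(\<Sum>c\<in>PiE D (\<lambda>_. S \<times> S). f c) =
   (\<Sum>a\<in>PiE D (\<lambda>_. S). \<Sum>b\<in>PiE D (\<lambda>_. S). f (\<lambda>e\<in>D. if sw e then (a e, b e) else (b e, a e)))"
proof -
  have "(\<Sum>c\<in>PiE D (\<lambda>_. S \<times> S). f c) =
     (\<Sum>(a,b)\<in>PiE D (\<lambda>_. S) \<times> PiE D (\<lambda>_. S). f (\<lambda>e\<in>D. if sw e then (a e, b e) else (b e, a e)))"
    by (intro sum.reindex_bij_witness[of _ "\<lambda>(a,b). (\<lambda>e\<in>D. if sw e then (a e, b e) else (b e, a e))"
          "\<lambda>c. (\<lambda>e\<in>D. if sw e then fst (c e) else snd (c e), \<lambda>e\<in>D. if sw e then snd (c e) else fst (c e))"])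
       (auto simp: PiE_def extensional_def Pi_def mem_Times_iff intro!: arg_cong[where f=f] ext)
  also have "\<dots> = (\<Sum>a\<in>PiE D (\<lambda>_. S). \<Sum>b\<in>PiE D (\<lambda>_. S). f (\<lambda>e\<in>D. if sw e then (a e, b e) else (b e, a e)))"
    by (subst sum.cartesian_product) auto
  finally show ?thesis .
qed

definition mT :: "nat \<Rightarrow> 'e set \<Rightarrow> ('e \<Rightarrow> bool) \<Rightarrow> 'e set \<Rightarrow> 'e set \<Rightarrow> (('e \<Rightarrow> nat) \<Rightarrow> real)
   \<Rightarrow> (('e \<Rightarrow> nat) \<Rightarrow> real) \<Rightarrow> ('e \<Rightarrow> nat \<Rightarrow> nat \<Rightarrow> real) \<Rightarrow> ('e \<Rightarrow> nat) \<Rightarrow> real" where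
  "mT n D sw A B fs f2 fe = (\<lambda>x. \<Sum>c\<in>PiE D (\<lambda>_. {..<n} \<times> {..<n}).
      fs (\<lambda>e\<in>A. if e \<in> D then (if sw e then fst (c e) else snd (c e)) else x e)
    * f2 (\<lambda>e\<in>B. if e \<in> D then (if sw e then snd (c e) else fst (c e)) else x e)
    * (\<Prod>e\<in>D. fe e (fst (c e)) (snd (c e))))"

lemma mT_point:
  assumes a: "a \<in> PiE D (\<lambda>_. S)" and b: "b \<in> PiE D (\<lambda>_. S)"
    and p: "p \<in> PiE P (\<lambda>_. S)" and q: "q \<in> PiE Q (\<lambda>_. S)"
    and disj: "P \<inter> Q = {}" "P \<inter> D = {}" "Q \<inter> D = {}"
    and c: "c = (\<lambda>e\<in>D. if sw e then (a e, b e) else (b e, a e))"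
  shows "fs (\<lambda>e\<in>P \<union> D. if e \<in> D then (if sw e then fst (c e) else snd (c e))
                  else (if e \<in> P then p e else q e))
          * f2 (\<lambda>e\<in>Q \<union> D. if e \<in> D then (if sw e then snd (c e) else fst (c e))
                  else (if e \<in> P then p e else q e))
          * (\<Prod>e\<in>D. fe e (fst (c e)) (snd (c e)))
     = fs (\<lambda>e. if e \<in> P then p e else a e) * f2 (\<lambda>e. if e \<in> Q then q e else b e)
          * (\<Prod>e\<in>D. (if sw e then fe e (a e) (b e) else fe e (b e) (a e)))"
proof -
  have 1: "(\<lambda>e\<in>P \<union> D. if e \<in> D then (if sw e then fst (c e) else snd (c e))
                  else (if e \<in> P then p e else q e)) = (\<lambda>e. if e \<in> P then p e else a e)"
  proof (rule ext)
    fix e show "(\<lambda>e\<in>P \<union> D. if e \<in> D then (if sw e then fst (c e) else snd (c e))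
              else (if e \<in> P then p e else q e)) e = (if e \<in> P then p e else a e)"
      using disj unfolding c by (cases "e \<in> D"; cases "e \<in> P") (auto simp: PiE_arb[OF a])
  qed
  have 2: "(\<lambda>e\<in>Q \<union> D. if e \<in> D then (if sw e then snd (c e) else fst (c e))
                  else (if e \<in> P then p e else q e)) = (\<lambda>e. if e \<in> Q then q e else b e)"
  proof (rule ext)
    fix e show "(\<lambda>e\<in>Q \<union> D. if e \<in> D then (if sw e then snd (c e) else fst (c e))
              else (if e \<in> P then p e else q e)) e = (if e \<in> Q then q e else b e)"
      using disj unfolding c by (cases "e \<in> D"; cases "e \<in> Q") (auto simp: PiE_arb[OF b])
  qed
  have 3: "(\<Prod>e\<in>D. fe e (fst (c e)) (snd (c e))) = (\<Prod>e\<in>D. (if sw e then fe e (a e) (b e) else fe e (b e) (a e)))"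
    unfolding c by (intro prod.cong) auto
  show ?thesis unfolding 1 2 3 ..
qed

lemma merge_frob:
  fixes fs f2 :: "('e \<Rightarrow> nat) \<Rightarrow> real"
  assumes fin: "finite P" "finite Q" "finite D"
    and disj: "P \<inter> Q = {}" "P \<inter> D = {}" "Q \<inter> D = {}"
  shows "frob_norm n (P \<union> Q) (mT n D sw (P \<union> D) (Q \<union> D) fs f2 fe)
     \<le> frob_norm n (P \<union> D) fs * (\<Prod>e\<in>D. matrix_op_norm n (fe e)) * matricization_norm n Q D f2"
proof -
  let ?X = "\<lambda>S. PiE S (\<lambda>_::'e. {..<n::nat})"
  define N where "N = (\<lambda>q b. f2 (\<lambda>e. if e \<in> Q then q e else b e))"
  define r where "r = (\<lambda>p a. fs (\<lambda>e. if e \<in> P then p e else a e))"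
  define Me where "Me = (\<lambda>e i j. if sw e then fe e i j else fe e j i)"
  define u where "u = (\<lambda>p b. \<Sum>a\<in>?X D. r p a * (\<Prod>e\<in>D. Me e (a e) (b e)))"
  define C where "C = (\<Prod>e\<in>D. matrix_op_norm n (fe e))"
  define Nm where "Nm = matricization_norm n Q D f2"
  have C0: "0 \<le> C" unfolding C_def matrix_op_norm_def by (intro prod_nonneg) (simp add: op_norm_nonneg)
  have Nm0: "0 \<le> Nm" unfolding Nm_def matricization_norm_def by (simp add: op_norm_nonneg)
  have step1: "mT n D sw (P \<union> D) (Q \<union> D) fs f2 fe (\<lambda>e. if e \<in> P then p e else q e) = (\<Sum>b\<in>?X D. N q b * u p b)"
    if p: "p \<in> ?X P" and q: "q \<in> ?X Q" for p q
  proof -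
    have "mT n D sw (P \<union> D) (Q \<union> D) fs f2 fe (\<lambda>e. if e \<in> P then p e else q e)
      = (\<Sum>a\<in>?X D. \<Sum>b\<in>?X D. r p a * N q b * (\<Prod>e\<in>D. Me e (a e) (b e)))"
      unfolding mT_def
      unfolding r_def N_def Me_def
      by (subst sum_PiE_pairs[where sw=sw], intro sum.cong refl mT_point[OF _ _ p q disj]) auto
    also have "\<dots> = (\<Sum>b\<in>?X D. N q b * u p b)"
      unfolding u_def by (subst sum.swap) (simp add: sum_distrib_left mult_ac)
    finally show ?thesis .
  qed
  have finX: "finite (?X S)" if "finite S" for S using that by (simp add: finite_PiE)
  have step2: "(\<Sum>q\<in>?X Q. (mT n D sw (P \<union> D) (Q \<union> D) fs f2 fe (\<lambda>e. if e \<in> P then p e else q e))^2)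
     \<le> Nm^2 * (C^2 * (\<Sum>a\<in>?X D. (r p a)^2))" if p: "p \<in> ?X P" for p
  proof -
    have "(\<Sum>q\<in>?X Q. (mT n D sw (P \<union> D) (Q \<union> D) fs f2 fe (\<lambda>e. if e \<in> P then p e else q e))^2)
        = (\<Sum>q\<in>?X Q. (\<Sum>b\<in>?X D. N q b * u p b)^2)"
      using p by (intro sum.cong refl) (simp add: step1)
    also have "\<dots> \<le> Nm^2 * (\<Sum>b\<in>?X D. (u p b)^2)"
      unfolding Nm_def matricization_norm_def N_def
      by (rule op_norm_bound[OF finX[OF fin(3)]])
    also have "(\<Sum>b\<in>?X D. (u p b)^2) \<le> C^2 * (\<Sum>a\<in>?X D. (r p a)^2)"
      unfolding u_def C_def
    proof (rule tensor_bound[OF fin(3)])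
      fix e y assume e: "e \<in> D"
      show "(\<Sum>j<n. (\<Sum>i<n. Me e i j * y i)^2) \<le> (matrix_op_norm n (fe e))^2 * (\<Sum>i<n. (y i)^2)"
      proof (cases "sw e")
        case True
        then show ?thesis unfolding Me_def matrix_op_norm_def
          using op_norm_transpose_bound[where A="{..<n}" and B="{..<n}" and M="fe e" and y=y] by simp
      next
        case False
        then show ?thesis unfolding Me_def matrix_op_norm_def
          using op_norm_bound[where A="{..<n}" and B="{..<n}" and M="fe e" and y=y] by simp
      qed
    next
      fix e show "0 \<le> matrix_op_norm n (fe e)" unfolding matrix_op_norm_def by (rule op_norm_nonneg)
    qed
    then have "Nm^2 * (\<Sum>b\<in>?X D. (u p b)^2) \<le> Nm^2 * (C^2 * (\<Sum>a\<in>?X D. (r p a)^2))"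
      by (rule mult_left_mono) simp
    finally show ?thesis .
  qed
  have "(\<Sum>x\<in>?X (P \<union> Q). (mT n D sw (P \<union> D) (Q \<union> D) fs f2 fe x)^2)
      = (\<Sum>p\<in>?X P. \<Sum>q\<in>?X Q. (mT n D sw (P \<union> D) (Q \<union> D) fs f2 fe (\<lambda>e. if e \<in> P then p e else q e))^2)"
    by (rule sum_PiE_Un[OF disj(1)])
  also have "\<dots> \<le> (\<Sum>p\<in>?X P. Nm^2 * (C^2 * (\<Sum>a\<in>?X D. (r p a)^2)))"
    by (rule sum_mono) (rule step2)
  also have "\<dots> = (Nm * C)^2 * (\<Sum>p\<in>?X P. (\<Sum>a\<in>?X D. (r p a)^2))"
    by (simp add: sum_distrib_left power_mult_distrib mult.assoc)
  also have "(\<Sum>p\<in>?X P. (\<Sum>a\<in>?X D. (r p a)^2)) = (\<Sum>x\<in>?X (P \<union> D). (fs x)^2)"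
    unfolding r_def by (rule sum_PiE_Un[OF disj(2), symmetric])
  finally have *: "(\<Sum>x\<in>?X (P \<union> Q). (mT n D sw (P \<union> D) (Q \<union> D) fs f2 fe x)^2)
      \<le> (Nm * C)^2 * (\<Sum>x\<in>?X (P \<union> D). (fs x)^2)" .
  have "frob_norm n (P \<union> Q) (mT n D sw (P \<union> D) (Q \<union> D) fs f2 fe)
      \<le> sqrt ((Nm * C)^2 * (\<Sum>x\<in>?X (P \<union> D). (fs x)^2))"
    unfolding frob_norm_def using * by simp
  also have "\<dots> = Nm * C * frob_norm n (P \<union> D) fs"
    unfolding frob_norm_def using Nm0 C0 by (simp add: real_sqrt_mult)
  finally show ?thesis unfolding C_def Nm_def by (simp add: mult_ac)
qed

lemma merge_val:
  fixes fv :: "'v \<Rightarrow> ('e \<Rightarrow> nat) \<Rightarrow> real"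
  assumes mg: "multigraph V E ends" and sV: "s \<in> V" and v2V: "v2 \<in> V" and sv2: "s \<noteq> v2"
  defines "D \<equiv> incident E ends s \<inter> incident E ends v2"
    and "ends' \<equiv> \<lambda>e. ((if fst (ends e) = s then v2 else fst (ends e)), (if snd (ends e) = s then v2 else snd (ends e)))"
  shows "tn_val n (V - {s}) (E - D) ends'
           (fv(v2 := mT n D (\<lambda>e. fst (ends e) = s) (incident E ends s) (incident E ends v2) (fv s) (fv v2) fe)) fe
         = tn_val n V E ends fv fe"
proof -
  let ?Y = "\<lambda>S. PiE S (\<lambda>_::'e. {..<n::nat} \<times> {..<n})"
  let ?sw = "\<lambda>e. fst (ends e) = s"
  define F where "F = mT n D ?sw (incident E ends s) (incident E ends v2) (fv s) (fv v2) fe"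
  define Lc :: "('e \<Rightarrow> nat \<times> nat) \<Rightarrow> 'v \<Rightarrow> 'e \<Rightarrow> nat" where "Lc = (\<lambda>i v. restrict (\<lambda>e. if fst (ends e) = v then fst (i e) else snd (i e)) (incident E ends v))"
  define Lc' :: "('e \<Rightarrow> nat \<times> nat) \<Rightarrow> 'v \<Rightarrow> 'e \<Rightarrow> nat" where "Lc' = (\<lambda>i v. restrict (\<lambda>e. if fst (ends' e) = v then fst (i e) else snd (i e)) (incident (E - D) ends' v))"
  have finV: "finite V" and finE: "finite E" and endsV: "\<And>e. e \<in> E \<Longrightarrow> fst (ends e) \<in> V \<and> snd (ends e) \<in> V \<and> fst (ends e) \<noteq> snd (ends e)"
    using mg unfolding multigraph_def by auto
  have DE: "D \<subseteq> E" unfolding D_def incident_def by auto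
  have Eu: "E = (E - D) \<union> D" using DE by auto
  have rhs: "tn_val n V E ends fv fe = (\<Sum>i'\<in>?Y (E - D). \<Sum>c\<in>?Y D.
       (\<Prod>v\<in>V. fv v (Lc (\<lambda>e. if e \<in> E - D then i' e else c e) v))
     * (\<Prod>e\<in>E. fe e (fst ((\<lambda>e. if e \<in> E - D then i' e else c e) e)) (snd ((\<lambda>e. if e \<in> E - D then i' e else c e) e))))"
    unfolding tn_val_def Lc_def
    by (subst Eu, subst sum_PiE_Un) (auto simp flip: Eu)
  have lhs: "tn_val n (V - {s}) (E - D) ends' (fv(v2 := F)) fe = (\<Sum>i'\<in>?Y (E - D).
       (\<Prod>v\<in>V - {s}. (fv(v2 := F)) v (Lc' i' v)) * (\<Prod>e\<in>E - D. fe e (fst (i' e)) (snd (i' e))))"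
    unfolding tn_val_def Lc'_def ..
  show ?thesis
    unfolding F_def[symmetric] lhs rhs
  proof (rule sum.cong[OF refl])
    fix i' assume i': "i' \<in> ?Y (E - D)"
    define R where "R = (\<Prod>v\<in>V - {s} - {v2}. fv v (Lc' i' v))"
    define G where "G = (\<Prod>e\<in>E - D. fe e (fst (i' e)) (snd (i' e)))"
    have "(\<Prod>v\<in>V - {s}. (fv(v2 := F)) v (Lc' i' v)) = F (Lc' i' v2) * R"
      unfolding R_def using finV v2V sv2 by (subst prod.remove[of _ v2]) (auto intro!: prod.cong)
    then have L: "(\<Prod>v\<in>V - {s}. (fv(v2 := F)) v (Lc' i' v)) * (\<Prod>e\<in>E - D. fe e (fst (i' e)) (snd (i' e)))
        = F (Lc' i' v2) * R * G" unfolding G_def by simp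
    have "(\<Prod>v\<in>V. fv v (Lc (\<lambda>e. if e \<in> E - D then i' e else c e) v))
        * (\<Prod>e\<in>E. fe e (fst ((\<lambda>e. if e \<in> E - D then i' e else c e) e)) (snd ((\<lambda>e. if e \<in> E - D then i' e else c e) e)))
       = fv s (\<lambda>e\<in>incident E ends s. if e \<in> D then (if ?sw e then fst (c e) else snd (c e)) else Lc' i' v2 e)
       * fv v2 (\<lambda>e\<in>incident E ends v2. if e \<in> D then (if ?sw e then snd (c e) else fst (c e)) else Lc' i' v2 e)
       * (\<Prod>e\<in>D. fe e (fst (c e)) (snd (c e))) * R * G" if c: "c \<in> ?Y D" for c
    proof -
      let ?m = "\<lambda>e. if e \<in> E - D then i' e else c e"
      have pv: "(\<Prod>v\<in>V. fv v (Lc ?m v)) = fv s (Lc ?m s) * (fv v2 (Lc ?m v2) * (\<Prod>v\<in>V - {s} - {v2}. fv v (Lc ?m v)))"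
        using finV sV v2V sv2 by (simp add: prod.remove[of V s] prod.remove[of "V - {s}" v2])
      have pR: "(\<Prod>v\<in>V - {s} - {v2}. fv v (Lc ?m v)) = R"
        unfolding R_def
      proof (rule prod.cong[OF refl])
        fix v assume v: "v \<in> V - {s} - {v2}"
        have inc: "incident (E - D) ends' v = incident E ends v"
          using v sv2 unfolding incident_def D_def ends'_def by auto
        have "Lc ?m v = Lc' i' v"
          unfolding Lc_def Lc'_def inc
        proof (rule restrict_ext)
          fix e assume e: "e \<in> incident E ends v"
          then have "e \<notin> D" "e \<in> E" using v sv2 unfolding incident_def D_def by auto
          then show "(if fst (ends e) = v then fst (?m e) else snd (?m e)) = (if fst (ends' e) = v then fst (i' e) else snd (i' e))"
            using v unfolding ends'_def by auto
        qed
        then show "fv v (Lc ?m v) = fv v (Lc' i' v)" by simp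
      qed
      have pe: "(\<Prod>e\<in>E. fe e (fst (?m e)) (snd (?m e))) = G * (\<Prod>e\<in>D. fe e (fst (c e)) (snd (c e)))"
        unfolding G_def prod.subset_diff[OF DE finE]
        by (intro arg_cong2[where f="(*)"] prod.cong refl) auto
      have ps: "Lc ?m s = (\<lambda>e\<in>incident E ends s. if e \<in> D then (if ?sw e then fst (c e) else snd (c e)) else Lc' i' v2 e)"
        unfolding Lc_def
      proof (rule restrict_ext)
        fix e assume e: "e \<in> incident E ends s"
        show "(if fst (ends e) = s then fst (?m e) else snd (?m e)) = (if e \<in> D then (if ?sw e then fst (c e) else snd (c e)) else Lc' i' v2 e)"
        proof (cases "e \<in> D")
          case True then show ?thesis by simp
        next
          case False
          then have "e \<in> incident (E - D) ends' v2" "fst (ends e) \<noteq> v2" "e \<in> E"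
            using e unfolding incident_def D_def ends'_def by auto
          then show ?thesis using False unfolding Lc'_def ends'_def by auto
        qed
      qed
      have pv2: "Lc ?m v2 = (\<lambda>e\<in>incident E ends v2. if e \<in> D then (if ?sw e then snd (c e) else fst (c e)) else Lc' i' v2 e)"
        unfolding Lc_def
      proof (rule restrict_ext)
        fix e assume e: "e \<in> incident E ends v2"
        show "(if fst (ends e) = v2 then fst (?m e) else snd (?m e)) = (if e \<in> D then (if ?sw e then snd (c e) else fst (c e)) else Lc' i' v2 e)"
        proof (cases "e \<in> D")
          case True
          then have "e \<in> E" "fst (ends e) = s \<or> fst (ends e) = v2" "fst (ends e) \<noteq> snd (ends e)"
            "fst (ends e) = s \<or> snd (ends e) = s"
            using endsV sv2 unfolding D_def incident_def by auto
          then have "fst (ends e) = v2 \<longleftrightarrow> \<not> ?sw e" using sv2 by auto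
          then show ?thesis using True by simp
        next
          case False
          then have "e \<in> incident (E - D) ends' v2" "fst (ends e) \<noteq> s" "e \<in> E"
            using e unfolding incident_def D_def ends'_def by auto
          then show ?thesis using False unfolding Lc'_def ends'_def by auto
        qed
      qed
      show ?thesis unfolding pv pR pe ps pv2 by (simp add: mult_ac)
    qed
    then have "(\<Sum>c\<in>?Y D. (\<Prod>v\<in>V. fv v (Lc (\<lambda>e. if e \<in> E - D then i' e else c e) v))
        * (\<Prod>e\<in>E. fe e (fst ((\<lambda>e. if e \<in> E - D then i' e else c e) e)) (snd ((\<lambda>e. if e \<in> E - D then i' e else c e) e))))
      = (\<Sum>c\<in>?Y D. fv s (\<lambda>e\<in>incident E ends s. if e \<in> D then (if ?sw e then fst (c e) else snd (c e)) else Lc' i' v2 e)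
       * fv v2 (\<lambda>e\<in>incident E ends v2. if e \<in> D then (if ?sw e then snd (c e) else fst (c e)) else Lc' i' v2 e)
       * (\<Prod>e\<in>D. fe e (fst (c e)) (snd (c e)))) * R * G"
      by (simp add: sum_distrib_right)
    also have "\<dots> = F (Lc' i' v2) * R * G"
      unfolding F_def mT_def ..
    finally show "(\<Prod>v\<in>V - {s}. (fv(v2 := F)) v (Lc' i' v)) * (\<Prod>e\<in>E - D. fe e (fst (i' e)) (snd (i' e)))
      = (\<Sum>c\<in>?Y D. (\<Prod>v\<in>V. fv v (Lc (\<lambda>e. if e \<in> E - D then i' e else c e) v))
        * (\<Prod>e\<in>E. fe e (fst ((\<lambda>e. if e \<in> E - D then i' e else c e) e)) (snd ((\<lambda>e. if e \<in> E - D then i' e else c e) e))))"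
      unfolding L by simp
  qed
qed

definition NmV :: "nat \<Rightarrow> 'e set \<Rightarrow> ('e \<Rightarrow> 'v \<times> 'v) \<Rightarrow> ('e \<Rightarrow> bool) \<Rightarrow> ('v \<Rightarrow> ('e \<Rightarrow> nat) \<Rightarrow> real) \<Rightarrow> 'v \<Rightarrow> real" where
  "NmV n E ends d fv v = matricization_norm n {e\<in>E. fst (oriented_arc ends d e) = v} {e\<in>E. snd (oriented_arc ends d e) = v} (fv v)"

lemma NmV_nonneg: "0 \<le> NmV n E ends d fv v"
  unfolding NmV_def matricization_norm_def by (rule op_norm_nonneg)

lemma frob_nonneg: "0 \<le> frob_norm n K T"
  unfolding frob_norm_def by (simp add: sum_nonneg)

lemma arc_ren: "oriented_arc (\<lambda>e. (g (fst (ends e)), g (snd (ends e)))) d e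
   = (g (fst (oriented_arc ends d e)), g (snd (oriented_arc ends d e)))"
  by (simp add: oriented_arc_def)

lemma arc_cases: "(fst (oriented_arc ends d e) = fst (ends e) \<and> snd (oriented_arc ends d e) = snd (ends e))
   \<or> (fst (oriented_arc ends d e) = snd (ends e) \<and> snd (oriented_arc ends d e) = fst (ends e))"
  by (simp add: oriented_arc_def)

lemma incident_arc: "incident E ends v = {e\<in>E. fst (oriented_arc ends d e) = v \<or> snd (oriented_arc ends d e) = v}"
  unfolding incident_def oriented_arc_def by auto

lemma gen:
  fixes fv :: "'v \<Rightarrow> ('e \<Rightarrow> nat) \<Rightarrow> real" and rk :: "'v \<Rightarrow> nat"
  assumes "multigraph V E ends" "s \<in> V"
    "\<forall>e\<in>E. rk (fst (oriented_arc ends d e)) < rk (snd (oriented_arc ends d e))"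
    "\<forall>v\<in>V - {s}. rk s < rk v"
  shows "\<bar>tn_val n V E ends fv fe\<bar> \<le> frob_norm n (incident E ends s) (fv s)
     * (\<Prod>v\<in>V - {s}. NmV n E ends d fv v) * (\<Prod>e\<in>E. matrix_op_norm n (fe e))"
  using assms
proof (induction "card V" arbitrary: V E ends fv rk s rule: less_induct)
  case less
  note mg = less.prems(1) and sV = less.prems(2) and rkE = less.prems(3) and rkV = less.prems(4)
  have finV: "finite V" and finE: "finite E"
    and endsV: "\<And>e. e \<in> E \<Longrightarrow> fst (ends e) \<in> V \<and> snd (ends e) \<in> V \<and> fst (ends e) \<noteq> snd (ends e)"
    using mg unfolding multigraph_def by auto
  let ?tl = "\<lambda>e. fst (oriented_arc ends d e)"
  let ?hd = "\<lambda>e. snd (oriented_arc ends d e)"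
  have arcV: "?tl e \<in> V" "?hd e \<in> V" "?tl e \<noteq> ?hd e" if "e \<in> E" for e
    using endsV[OF that] arc_cases[of ends d e] by auto
  have F1: "?hd e \<noteq> s" if e: "e \<in> E" for e
  proof
    assume h: "?hd e = s"
    then have "?tl e \<in> V - {s}" using arcV[OF e] by auto
    then have "rk s < rk (?tl e)" using rkV by auto
    moreover have "rk (?tl e) < rk (?hd e)" using rkE e by auto
    ultimately show False using h by simp
  qed
  show ?case
  proof (cases "V = {s}")
    case True
    have "E = {}"
    proof (rule ccontr)
      assume "E \<noteq> {}"
      then obtain e where "e \<in> E" by auto
      then show False using endsV[of e] True by auto
    qed
    have inc0: "incident {} ends s = {}" unfolding incident_def by simp
    have r0: "restrict g {} = (\<lambda>x. undefined)" for g :: "'e \<Rightarrow> nat" by auto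
    have "tn_val n V E ends fv fe = fv s (\<lambda>x. undefined)"
      unfolding tn_val_def True \<open>E = {}\<close> PiE_empty_domain inc0 r0 by (simp add: inc0 restrict_def)
    moreover have "frob_norm n (incident E ends s) (fv s) = \<bar>fv s (\<lambda>x. undefined)\<bar>"
      unfolding frob_norm_def \<open>E = {}\<close> inc0 PiE_empty_domain by simp
    ultimately show ?thesis using True \<open>E = {}\<close> by simp
  next
    case False
    then have ne: "V - {s} \<noteq> {}" using sV by auto
    define m where "m = Min (rk ` (V - {s}))"
    have "m \<in> rk ` (V - {s})" unfolding m_def using ne finV by (intro Min_in) auto
    then obtain v2 where v2: "v2 \<in> V - {s}" "rk v2 = m" by auto
    have v2min: "rk v2 \<le> rk w" if "w \<in> V - {s}" for w
      unfolding v2(2) m_def using that finV by (intro Min_le) auto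
    have v2V: "v2 \<in> V" and sv2: "s \<noteq> v2" using v2 by auto
    have F2: "?tl e = s" if e: "e \<in> E" and h: "?hd e = v2" for e
    proof (rule ccontr)
      assume "?tl e \<noteq> s"
      then have "?tl e \<in> V - {s}" using arcV[OF e] by auto
      then have "rk v2 \<le> rk (?tl e)" by (rule v2min)
      moreover have "rk (?tl e) < rk (?hd e)" using rkE e by auto
      ultimately show False using h by simp
    qed
    define D where "D = incident E ends s \<inter> incident E ends v2"
    define ren where "ren = (\<lambda>x. if x = s then v2 else x)"
    define ends' where "ends' = (\<lambda>e. (ren (fst (ends e)), ren (snd (ends e))))"
    define sw where "sw = (\<lambda>e. fst (ends e) = s)"
    define F where "F = mT n D sw (incident E ends s) (incident E ends v2) (fv s) (fv v2) fe"
    define fv' where "fv' = fv(v2 := F)"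
    define rk' where "rk' = rk(v2 := rk s)"
    have Dchar: "e \<in> D \<longleftrightarrow> e \<in> E \<and> ?tl e = s \<and> ?hd e = v2" for e
      unfolding D_def incident_arc[of _ _ _ d] using F1 F2 sv2 arcV by auto
    have arc': "oriented_arc ends' d e = (ren (?tl e), ren (?hd e))" for e
      unfolding ends'_def by (rule arc_ren)
    have val: "tn_val n (V - {s}) (E - D) ends' fv' fe = tn_val n V E ends fv fe"
      unfolding fv'_def F_def D_def ends'_def ren_def sw_def
      by (rule merge_val[OF mg sV v2V sv2])
    have mg': "multigraph (V - {s}) (E - D) ends'"
      unfolding multigraph_def
    proof (intro conjI ballI)
      fix e assume e: "e \<in> E - D"
      then have "e \<in> E" "\<not> ((fst (ends e) = s \<or> snd (ends e) = s) \<and> (fst (ends e) = v2 \<or> snd (ends e) = v2))"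
        unfolding D_def incident_def by auto
      then show "fst (ends' e) \<in> V - {s}" "snd (ends' e) \<in> V - {s}" "fst (ends' e) \<noteq> snd (ends' e)"
        using endsV[of e] v2 unfolding ends'_def ren_def by auto
    qed (use finV finE in auto)
    have rk'E: "\<forall>e\<in>E - D. rk' (fst (oriented_arc ends' d e)) < rk' (snd (oriented_arc ends' d e))"
    proof
      fix e assume e: "e \<in> E - D"
      then have eE: "e \<in> E" by auto
      have h1: "?hd e \<noteq> s" using F1[OF eE] .
      have h2: "?hd e \<noteq> v2" using F2[OF eE] e Dchar by auto
      have lt: "rk (?tl e) < rk (?hd e)" using rkE eE by auto
      have hdV: "?hd e \<in> V - {s}" using arcV[OF eE] h1 by auto
      have "rk' (ren (?tl e)) < rk' (ren (?hd e))"
      proof -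
        have "rk' (ren (?hd e)) = rk (?hd e)" unfolding rk'_def ren_def using h1 h2 by simp
        moreover have "rk' (ren (?tl e)) < rk (?hd e)"
        proof (cases "?tl e = s \<or> ?tl e = v2")
          case True
          then have "rk' (ren (?tl e)) = rk s" unfolding rk'_def ren_def by auto
          moreover have "rk s \<le> rk (?tl e)" using True rkV v2 by (auto intro: less_imp_le)
          ultimately show ?thesis using lt by simp
        next
          case False
          then show ?thesis unfolding rk'_def ren_def using lt by simp
        qed
        ultimately show ?thesis by simp
      qed
      then show "rk' (fst (oriented_arc ends' d e)) < rk' (snd (oriented_arc ends' d e))"
        unfolding arc' by simp
    qed
    have rk'V: "\<forall>v\<in>V - {s} - {v2}. rk' v2 < rk' v"
      unfolding rk'_def using rkV by auto
    have card: "card (V - {s}) < card V" using finV sV by (meson card_Diff1_less)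
    have IH: "\<bar>tn_val n (V - {s}) (E - D) ends' fv' fe\<bar> \<le> frob_norm n (incident (E - D) ends' v2) (fv' v2)
     * (\<Prod>v\<in>V - {s} - {v2}. NmV n (E - D) ends' d fv' v) * (\<Prod>e\<in>E - D. matrix_op_norm n (fe e))"
      using less.hyps[OF card mg' _ rk'E rk'V] v2 by blast
    define P where "P = incident E ends s - D"
    define Q where "Q = incident E ends v2 - D"
    have incs: "incident E ends s = P \<union> D" and incv2: "incident E ends v2 = Q \<union> D"
      unfolding P_def Q_def D_def by auto
    have inc': "incident (E - D) ends' v2 = P \<union> Q"
      unfolding incident_arc[of _ ends' _ d] arc' P_def Q_def incident_arc[of _ ends _ d]
      unfolding ren_def by auto
    have disj: "P \<inter> Q = {}" "P \<inter> D = {}" "Q \<inter> D = {}"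
      unfolding P_def Q_def D_def by auto
    have finPQD: "finite P" "finite Q" "finite D"
      unfolding P_def Q_def D_def incident_def using finE by auto
    have outs: "{e\<in>E. ?tl e = v2} = Q"
      unfolding Q_def incident_arc[of _ _ _ d] using Dchar F2 sv2 by auto
    have ins: "{e\<in>E. ?hd e = v2} = D"
      using Dchar F2 by auto
    have frobF: "frob_norm n (incident (E - D) ends' v2) (fv' v2)
        \<le> frob_norm n (incident E ends s) (fv s) * (\<Prod>e\<in>D. matrix_op_norm n (fe e)) * NmV n E ends d fv v2"
    proof -
      have "fv' v2 = mT n D sw (P \<union> D) (Q \<union> D) (fv s) (fv v2) fe"
        unfolding fv'_def F_def incs incv2 by simp
      then show ?thesis
        unfolding inc' incs NmV_def outs ins
        using merge_frob[OF finPQD disj] by simp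
    qed
    have NmEq: "(\<Prod>v\<in>V - {s} - {v2}. NmV n (E - D) ends' d fv' v) = (\<Prod>v\<in>V - {s} - {v2}. NmV n E ends d fv v)"
    proof (rule prod.cong[OF refl])
      fix v assume v: "v \<in> V - {s} - {v2}"
      have 1: "{e \<in> E - D. fst (oriented_arc ends' d e) = v} = {e\<in>E. ?tl e = v}"
        unfolding arc' ren_def using v Dchar by auto
      have 2: "{e \<in> E - D. snd (oriented_arc ends' d e) = v} = {e\<in>E. ?hd e = v}"
        unfolding arc' ren_def using v Dchar by auto
      show "NmV n (E - D) ends' d fv' v = NmV n E ends d fv v"
        unfolding NmV_def 1 2 fv'_def using v by simp
    qed
    have P0: "0 \<le> (\<Prod>v\<in>V - {s} - {v2}. NmV n E ends d fv v)"
      by (intro prod_nonneg) (simp add: NmV_nonneg)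
    have E0: "0 \<le> (\<Prod>e\<in>E - D. matrix_op_norm n (fe e))"
      by (intro prod_nonneg) (simp add: matrix_op_norm_def op_norm_nonneg)
    have "\<bar>tn_val n V E ends fv fe\<bar> \<le> frob_norm n (incident (E - D) ends' v2) (fv' v2)
     * (\<Prod>v\<in>V - {s} - {v2}. NmV n E ends d fv v) * (\<Prod>e\<in>E - D. matrix_op_norm n (fe e))"
      using IH unfolding val NmEq .
    also have "\<dots> \<le> (frob_norm n (incident E ends s) (fv s) * (\<Prod>e\<in>D. matrix_op_norm n (fe e)) * NmV n E ends d fv v2)
     * (\<Prod>v\<in>V - {s} - {v2}. NmV n E ends d fv v) * (\<Prod>e\<in>E - D. matrix_op_norm n (fe e))"
      by (intro mult_right_mono frobF P0 E0)
    also have "\<dots> = frob_norm n (incident E ends s) (fv s)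
     * (NmV n E ends d fv v2 * (\<Prod>v\<in>V - {s} - {v2}. NmV n E ends d fv v))
     * ((\<Prod>e\<in>E - D. matrix_op_norm n (fe e)) * (\<Prod>e\<in>D. matrix_op_norm n (fe e)))"
      by (simp add: mult_ac)
    also have "\<dots> = frob_norm n (incident E ends s) (fv s)
     * (\<Prod>v\<in>V - {s}. NmV n E ends d fv v) * (\<Prod>e\<in>E. matrix_op_norm n (fe e))"
    proof -
      have "NmV n E ends d fv v2 * (\<Prod>v\<in>V - {s} - {v2}. NmV n E ends d fv v) = (\<Prod>v\<in>V - {s}. NmV n E ends d fv v)"
        using finV v2 by (simp add: prod.remove[of "V - {s}" v2])
      moreover have "(\<Prod>e\<in>E - D. matrix_op_norm n (fe e)) * (\<Prod>e\<in>D. matrix_op_norm n (fe e)) = (\<Prod>e\<in>E. matrix_op_norm n (fe e))"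
        using finE by (intro prod.subset_diff[symmetric]) (auto simp: D_def incident_def)
      ultimately show ?thesis by simp
    qed
    finally show ?thesis .
  qed
qed

lemma op_norm_row: "op_norm {x0} B M \<le> sqrt (\<Sum>b\<in>B. (M x0 b)^2)"
  unfolding op_norm_def
proof (rule cSup_least)
  show "{sqrt (\<Sum>a\<in>{x0}. (\<Sum>b\<in>B. M a b * y b)^2) | y. (\<Sum>b\<in>B. (y b)^2) \<le> 1} \<noteq> {}"
  proof -
    have "sqrt (\<Sum>a\<in>{x0}. (\<Sum>b\<in>B. M a b * (\<lambda>_. 0) b)^2) \<in> {sqrt (\<Sum>a\<in>{x0}. (\<Sum>b\<in>B. M a b * y b)^2) | y. (\<Sum>b\<in>B. (y b)^2) \<le> 1}"
      by (rule CollectI, rule exI[of _ "\<lambda>_. 0"]) simp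
    then show ?thesis by blast
  qed
next
  fix x assume "x \<in> {sqrt (\<Sum>a\<in>{x0}. (\<Sum>b\<in>B. M a b * y b)^2) | y. (\<Sum>b\<in>B. (y b)^2) \<le> 1}"
  then obtain y where x: "x = sqrt ((\<Sum>b\<in>B. M x0 b * y b)^2)" and y: "(\<Sum>b\<in>B. (y b)^2) \<le> 1" by auto
  have "(\<Sum>b\<in>B. M x0 b * y b)^2 \<le> (\<Sum>b\<in>B. (M x0 b)^2) * (\<Sum>b\<in>B. (y b)^2)"
    by (rule Cauchy_Schwarz_ineq_sum)
  also have "\<dots> \<le> (\<Sum>b\<in>B. (M x0 b)^2) * 1"
    by (rule mult_left_mono[OF y]) (simp add: sum_nonneg)
  finally have "(\<Sum>b\<in>B. M x0 b * y b)^2 \<le> (\<Sum>b\<in>B. (M x0 b)^2)" by simp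
  then show "x \<le> sqrt (\<Sum>b\<in>B. (M x0 b)^2)" unfolding x by (rule real_sqrt_le_mono)
qed

lemma matricization_empty_le: "matricization_norm n {} J (T :: ('e \<Rightarrow> nat) \<Rightarrow> real) \<le> frob_norm n J T"
proof -
  have "matricization_norm n {} J T = op_norm {\<lambda>x::'e. undefined::nat} (PiE J (\<lambda>_. {..<n})) (\<lambda>(a::'e \<Rightarrow> nat) b. T b)"
    unfolding matricization_norm_def by simp
  also have "\<dots> \<le> frob_norm n J T"
    unfolding frob_norm_def by (rule op_norm_row)
  finally show ?thesis .
qed

lemma mat_op_norm_ge:
  assumes "finite K" "I \<subseteq> K" "I \<noteq> {}" "K - I \<noteq> {}"
  shows "matricization_norm n I (K - I) T \<le> mat_op_norm n K T"
proof -
  have fin: "finite {matricization_norm n I (K - I) T | I. I \<subseteq> K \<and> I \<noteq> {} \<and> K - I \<noteq> {}}"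
  proof (rule finite_subset)
    show "{matricization_norm n I (K - I) T | I. I \<subseteq> K \<and> I \<noteq> {} \<and> K - I \<noteq> {}} \<subseteq> (\<lambda>I. matricization_norm n I (K - I) T) ` Pow K"
      by auto
  qed (use assms(1) in simp)
  show ?thesis unfolding mat_op_norm_def
    by (rule Max_ge[OF fin]) (use assms in blast)
qed

theorem lemma5p4:
  fixes n :: nat and V :: "'v set" and E :: "'e set" and ends :: "'e \<Rightarrow> 'v \<times> 'v"
    and fv :: "'v \<Rightarrow> ('e \<Rightarrow> nat) \<Rightarrow> real" and fe :: "'e \<Rightarrow> nat \<Rightarrow> nat \<Rightarrow> real"
    and s t :: 'v
  assumes "multigraph V E ends"
    and "has_bipolar_orientation V E ends s t"
  shows "\<bar>tn_val n V E ends fv fe\<bar> \<le>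
    frob_norm n (incident E ends s) (fv s) * frob_norm n (incident E ends t) (fv t)
    * (\<Prod>v\<in>V - {s, t}. mat_op_norm n (incident E ends v) (fv v))
    * (\<Prod>e\<in>E. matrix_op_norm n (fe e))"
proof -
  note mg = assms(1)
  obtain d where bp: "bipolar_orientation V E ends d s t"
    using assms(2) unfolding has_bipolar_orientation_def by auto
  let ?tl = "\<lambda>e. fst (oriented_arc ends d e)"
  let ?hd = "\<lambda>e. snd (oriented_arc ends d e)"
  define R where "R = oriented_arc ends d ` E"
  have bp': "s \<in> V \<and> t \<in> V \<and> s \<noteq> t \<and> acyclic R \<and>
     (\<forall>v\<in>V. (\<not> (\<exists>e\<in>E. ?hd e = v)) \<longleftrightarrow> v = s) \<and>
     (\<forall>v\<in>V. (\<not> (\<exists>e\<in>E. ?tl e = v)) \<longleftrightarrow> v = t)"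
    using bp unfolding bipolar_orientation_def R_def by blast
  have sV: "s \<in> V" and tV: "t \<in> V" and st: "s \<noteq> t" and acyc: "acyclic R"
    using bp' by blast+
  have src1: "\<And>v. v \<in> V \<Longrightarrow> v \<noteq> s \<Longrightarrow> \<exists>e\<in>E. ?hd e = v"
    and src2: "\<And>e. e \<in> E \<Longrightarrow> ?hd e \<noteq> s"
    and snk1: "\<And>v. v \<in> V \<Longrightarrow> v \<noteq> t \<Longrightarrow> \<exists>e\<in>E. ?tl e = v"
    and snk2: "\<And>e. e \<in> E \<Longrightarrow> ?tl e \<noteq> t"
    using bp' sV tV by blast+
  have finV: "finite V" and finE: "finite E"
    and endsV: "\<And>e. e \<in> E \<Longrightarrow> fst (ends e) \<in> V \<and> snd (ends e) \<in> V \<and> fst (ends e) \<noteq> snd (ends e)"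
    using mg unfolding multigraph_def by auto
  have arcV: "?tl e \<in> V" "?hd e \<in> V" "?tl e \<noteq> ?hd e" if "e \<in> E" for e
    using endsV[OF that] arc_cases[of ends d e] by auto
  have RV: "R \<subseteq> V \<times> V"
  proof
    fix x assume "x \<in> R"
    then obtain e where e: "e \<in> E" "x = oriented_arc ends d e" unfolding R_def by blast
    then have "x = (?tl e, ?hd e)" by simp
    then show "x \<in> V \<times> V" using arcV[OF e(1)] by (simp add: mem_Times_iff)
  qed
  have RtV: "R\<^sup>+ \<subseteq> V \<times> V" using trancl_subset_Sigma[OF RV] .
  define anc where "anc = (\<lambda>v. {u. (u, v) \<in> R\<^sup>+})"
  define rk where "rk = (\<lambda>v. card (anc v))"
  have financ: "finite (anc v)" for v
  proof (rule finite_subset[OF _ finV])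
    show "anc v \<subseteq> V" using RtV unfolding anc_def by blast
  qed
  have rkE: "\<forall>e\<in>E. rk (?tl e) < rk (?hd e)"
  proof
    fix e assume e: "e \<in> E"
    have arcR: "(?tl e, ?hd e) \<in> R" unfolding R_def using e by (metis prod.collapse imageI)
    have "anc (?tl e) \<subset> anc (?hd e)"
    proof
      show "anc (?tl e) \<subseteq> anc (?hd e)" unfolding anc_def using arcR
        by (blast intro: trancl_into_trancl)
      have "?tl e \<in> anc (?hd e)" unfolding anc_def using arcR by blast
      moreover have "?tl e \<notin> anc (?tl e)" unfolding anc_def using acyc unfolding acyclic_def by blast
      ultimately show "anc (?tl e) \<noteq> anc (?hd e)" by auto
    qed
    then show "rk (?tl e) < rk (?hd e)" unfolding rk_def by (rule psubset_card_mono[OF financ])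
  qed
  have ancs: "anc s = {}"
  proof (rule ccontr)
    assume "anc s \<noteq> {}"
    then obtain u where "(u, s) \<in> R\<^sup>+" unfolding anc_def by auto
    then obtain w where "(w, s) \<in> R" by (auto elim: tranclE)
    then obtain e where "e \<in> E" "?hd e = s" unfolding R_def by (metis imageE snd_conv)
    then show False using src2 by metis
  qed
  have rkV: "\<forall>v\<in>V - {s}. rk s < rk v"
  proof
    fix v assume v: "v \<in> V - {s}"
    then obtain e where e: "e \<in> E" "?hd e = v" using src1 by blast
    then have "(?tl e, v) \<in> R" unfolding R_def by (metis prod.collapse imageI)
    then have "anc v \<noteq> {}" unfolding anc_def by blast
    then show "rk s < rk v" unfolding rk_def ancs using financ by (simp add: card_gt_0_iff)
  qed
  have main: "\<bar>tn_val n V E ends fv fe\<bar> \<le> frob_norm n (incident E ends s) (fv s)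
     * (\<Prod>v\<in>V - {s}. NmV n E ends d fv v) * (\<Prod>e\<in>E. matrix_op_norm n (fe e))"
    by (rule gen[OF mg sV rkE rkV])
  have Nt: "NmV n E ends d fv t \<le> frob_norm n (incident E ends t) (fv t)"
  proof -
    have o: "{e\<in>E. ?tl e = t} = {}" using snk2 by blast
    have i: "{e\<in>E. ?hd e = t} = incident E ends t"
      unfolding incident_arc[of _ _ _ d] using snk2 by blast
    show ?thesis unfolding NmV_def o i by (rule matricization_empty_le)
  qed
  have Nv: "NmV n E ends d fv v \<le> mat_op_norm n (incident E ends v) (fv v)" if v: "v \<in> V - {s, t}" for v
  proof -
    have sub: "{e\<in>E. ?tl e = v} \<subseteq> incident E ends v" unfolding incident_arc[of _ _ _ d] by auto
    have diff: "incident E ends v - {e\<in>E. ?tl e = v} = {e\<in>E. ?hd e = v}"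
      unfolding incident_arc[of _ _ _ d] using arcV by auto
    have ne1: "{e\<in>E. ?tl e = v} \<noteq> {}" using snk1[of v] v by blast
    have ne2: "incident E ends v - {e\<in>E. ?tl e = v} \<noteq> {}" unfolding diff using src1[of v] v by blast
    have fin: "finite (incident E ends v)" unfolding incident_def using finE by auto
    show ?thesis unfolding NmV_def diff[symmetric]
      by (rule mat_op_norm_ge[OF fin sub ne1 ne2])
  qed
  have split: "(\<Prod>v\<in>V - {s}. NmV n E ends d fv v) = NmV n E ends d fv t * (\<Prod>v\<in>V - {s, t}. NmV n E ends d fv v)"
  proof -
    have "V - {s, t} = V - {s} - {t}" by auto
    then show ?thesis using finV tV st by (simp add: prod.remove[of "V - {s}" t])
  qed
  have le: "(\<Prod>v\<in>V - {s, t}. NmV n E ends d fv v) \<le> (\<Prod>v\<in>V - {s, t}. mat_op_norm n (incident E ends v) (fv v))"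
    by (intro prod_mono conjI NmV_nonneg Nv)
  have "NmV n E ends d fv t * (\<Prod>v\<in>V - {s, t}. NmV n E ends d fv v)
     \<le> frob_norm n (incident E ends t) (fv t) * (\<Prod>v\<in>V - {s, t}. mat_op_norm n (incident E ends v) (fv v))"
    by (intro mult_mono Nt le frob_nonneg prod_nonneg NmV_nonneg)
  then have "frob_norm n (incident E ends s) (fv s) * (NmV n E ends d fv t * (\<Prod>v\<in>V - {s, t}. NmV n E ends d fv v))
     \<le> frob_norm n (incident E ends s) (fv s) * (frob_norm n (incident E ends t) (fv t) * (\<Prod>v\<in>V - {s, t}. mat_op_norm n (incident E ends v) (fv v)))"
    by (rule mult_left_mono[OF _ frob_nonneg])
  then have "frob_norm n (incident E ends s) (fv s) * (NmV n E ends d fv t * (\<Prod>v\<in>V - {s, t}. NmV n E ends d fv v)) * (\<Prod>e\<in>E. matrix_op_norm n (fe e))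
     \<le> frob_norm n (incident E ends s) (fv s) * (frob_norm n (incident E ends t) (fv t) * (\<Prod>v\<in>V - {s, t}. mat_op_norm n (incident E ends v) (fv v))) * (\<Prod>e\<in>E. matrix_op_norm n (fe e))"
    by (rule mult_right_mono) (intro prod_nonneg, simp add: matrix_op_norm_def op_norm_nonneg)
  then have "frob_norm n (incident E ends s) (fv s) * (\<Prod>v\<in>V - {s}. NmV n E ends d fv v) * (\<Prod>e\<in>E. matrix_op_norm n (fe e))
     \<le> frob_norm n (incident E ends s) (fv s) * (frob_norm n (incident E ends t) (fv t) * (\<Prod>v\<in>V - {s, t}. mat_op_norm n (incident E ends v) (fv v))) * (\<Prod>e\<in>E. matrix_op_norm n (fe e))"
    unfolding split .
  with main show ?thesis by (simp add: mult_ac)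
qed

end
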